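(* Let $\mathcal{A}$ be a finite set of positive integers, let $w \leqslant z$ be real numbers, let $0 < m_0 \leqslant 1$, and let $m_1, m_2, m_3, m_4$ be real numbers with $(m_1, m_2) \in \mathcal{U}$ and $(m_3, m_4) \in \mathcal{U}$. Writing $N^r_5 = \sum_{0 \leqslant i_1 < \cdots < i_r \leqslant 4} m_{i_1}\cdots m_{i_r}$ and $Q = m_0m_1m_2m_3m_4$, we have $$ S(\mathcal{A}, z) \geqslant S(\mathcal{A}, w) - \frac{N^4_5 - N^3_5 + N^2_5 - N^1_5 + 1}{Q} \sum_{w \leqslant p_1 < z} S(\mathcal{A}_{p_1}, w) + \frac{2(N^3_5 - 3N^2_5 + 7N^1_5 - 15)}{Q} \sum_{w \leqslant p_2 < p_1 < z} S(\mathcal{A}_{p_1p_2}, w) $$ $$ - \frac{6(N^2_5 - 6N^1_5 + 25)}{Q} \sum_{w \leqslant p_3 < p_2 < p_1 < z} S(\mathcal{A}_{p_1p_2p_3}, w) + \frac{24(N^1_5 - 10)}{Q} \sum_{w \leqslant p_4 < \cdots < p_1 < z} S(\mathcal{A}_{p_1p_2p_3p_4}, w) - \frac{120}{Q} \sum_{w \leqslant p_5 < \cdots < p_1 < z} S(\mathcal{A}_{p_1\cdots p_5}, w). $$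
   Context: Throughout, $p, p_1, p_2, \dots$ denote prime numbers. For a finite set $\mathcal{A}$ of positive integers and a positive integer $d$, $\mathcal{A}_d = \{a : ad \in \mathcal{A}\}$. For real $z$, $S(\mathcal{A}, z)$ denotes the number of $a \in \mathcal{A}$ having no prime factor less than $z$. Let $T = (0,1] \cup [2,3] \cup [4,5] \cup \cdots$, i.e. $T$ is the union of $(0,1]$ and the intervals $[k-1,k]$ over all odd integers $k \geqslant 3$, and let $\mathcal{U} = \{(x_1, x_2) : x_1, x_2 \in T,\ |x_1 - x_2| \leqslant 1\}$. *)

theory Defs
  imports "HOL-Computational_Algebra.Primes" Complex_Main
begin

definition sift :: "nat set \<Rightarrow> real \<Rightarrow> nat" where
  "sift A z = card {a \<in> A. \<forall>p. prime p \<and> p dvd a \<longrightarrow> z \<le> real p}"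

definition restr :: "nat set \<Rightarrow> nat \<Rightarrow> nat set" where
  "restr A d = {a. a * d \<in> A}"

definition primes_in :: "real \<Rightarrow> real \<Rightarrow> nat set" where
  "primes_in w z = {p. prime p \<and> w \<le> real p \<and> real p < z}"

definition T_set :: "real set" where
  "T_set = {x. 0 < x \<and> x \<le> 1} \<union> {x. \<exists>k::nat. odd k \<and> 3 \<le> k \<and> real k - 1 \<le> x \<and> x \<le> real k}"

definition U_set :: "(real \<times> real) set" where
  "U_set = {(x1, x2). x1 \<in> T_set \<and> x2 \<in> T_set \<and> \<bar>x1 - x2\<bar> \<le> 1}"

definition N5 :: "(nat \<Rightarrow> real) \<Rightarrow> nat \<Rightarrow> real" where
  "N5 m r = (\<Sum>I \<in> {I. I \<subseteq> {0..4} \<and> card I = r}. \<Prod>i\<in>I. m i)"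

end

theory Submission
  imports Defs
begin

definition rough :: "real \<Rightarrow> nat \<Rightarrow> bool" where
  "rough w a \<longleftrightarrow> (\<forall>p. prime p \<and> p dvd a \<longrightarrow> w \<le> real p)"

lemma rough_mult: "rough w (x * y) = (rough w x \<and> rough w y)"
  unfolding rough_def by (auto simp: prime_dvd_mult_iff)

lemma rough_prime: "prime p \<Longrightarrow> w \<le> real p \<Longrightarrow> rough w p"
  unfolding rough_def using primes_dvd_imp_eq by blast

lemma rough_div:
  assumes r: "rough w a" shows "(d dvd a \<and> rough w (a div d)) = (d dvd a)"
proof (cases "d dvd a")
  case True
  have "rough w (a div d)" unfolding rough_def
  proof (intro allI impI)
    fix p assume p: "prime p \<and> p dvd a div d"
    then have "p dvd (a div d) * d" by (simp add: dvd_mult2)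
    then have "p dvd a" using True by simp
    then show "w \<le> real p" using r p unfolding rough_def by blast
  qed
  then show ?thesis by simp
qed simp

lemma not_rough:
  assumes "\<not> rough w a" "rough w d" shows "\<not> (d dvd a \<and> rough w (a div d))"
proof
  assume h: "d dvd a \<and> rough w (a div d)"
  then have "a = d * (a div d)" by simp
  then have "rough w a" using h assms(2) rough_mult by metis
  then show False using assms(1) by blast
qed

lemma card_sum: "finite A \<Longrightarrow> real (card {a\<in>A. R a}) = (\<Sum>a\<in>A. if R a then 1 else 0)"
proof -
  assume f: "finite A"
  have "real (card {a\<in>A. R a}) = (\<Sum>a\<in>{a\<in>A. R a}. 1)" by simp
  also have "\<dots> = (\<Sum>a\<in>A. if R a then 1 else 0)" using sum.inter_filter[OF f] by blast
  finally show ?thesis .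
qed

lemma sift_sum: "finite A \<Longrightarrow> real (sift A w) = (\<Sum>a\<in>A. if rough w a then 1 else 0)"
  unfolding sift_def rough_def by (rule card_sum)

lemma sift_restr:
  assumes f: "finite A" and d: "0 < d"
  shows "real (sift (restr A d) w) = (\<Sum>a\<in>A. if d dvd a \<and> rough w (a div d) then 1 else 0)"
proof -
  have "(\<lambda>b. b * d) ` {b\<in>restr A d. rough w b} = {a\<in>A. d dvd a \<and> rough w (a div d)}"
  proof (rule set_eqI, rule iffI)
    fix a assume "a \<in> (\<lambda>b. b * d) ` {b\<in>restr A d. rough w b}"
    then show "a \<in> {a\<in>A. d dvd a \<and> rough w (a div d)}" using d by (auto simp: restr_def)
  next
    fix a assume a: "a \<in> {a\<in>A. d dvd a \<and> rough w (a div d)}"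
    then have "a = (a div d) * d" by auto
    then show "a \<in> (\<lambda>b. b * d) ` {b\<in>restr A d. rough w b}" using a
      by (auto simp: restr_def image_iff intro!: exI[of _ "a div d"])
  qed
  moreover have "inj_on (\<lambda>b. b * d) {b\<in>restr A d. rough w b}" using d by (auto simp: inj_on_def)
  ultimately have "card {b\<in>restr A d. rough w b} = card {a\<in>A. d dvd a \<and> rough w (a div d)}"
    by (metis card_image)
  moreover have "sift (restr A d) w = card {b\<in>restr A d. rough w b}"
    unfolding sift_def rough_def by simp
  ultimately show ?thesis using card_sum[OF f] by simp
qed

lemma hockey_set:
  fixes D :: "nat set"
  assumes "finite D"
  shows "(\<Sum>p\<in>D. real (card {q\<in>D. q < p} choose j)) = real (card D choose Suc j)"
  using assms
proof (induction D rule: finite_linorder_max_induct)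
  case empty
  then show ?case by simp
next
  case (insert b A)
  have bA: "b \<notin> A" using insert by auto
  have e1: "{q \<in> insert b A. q < b} = A" using insert by auto
  have e2: "\<And>p. p \<in> A \<Longrightarrow> {q \<in> insert b A. q < p} = {q\<in>A. q < p}" using insert by auto
  have "(\<Sum>p\<in>insert b A. real (card {q\<in>insert b A. q < p} choose j))
      = real (card A choose j) + (\<Sum>p\<in>A. real (card {q\<in>insert b A. q < p} choose j))"
    using bA insert.hyps e1 by simp
  also have "(\<Sum>p\<in>A. real (card {q\<in>insert b A. q < p} choose j)) = (\<Sum>p\<in>A. real (card {q\<in>A. q < p} choose j))"
    using e2 by (intro sum.cong) auto
  finally show ?case using insert bA by simp
qed

lemma hockey0:
  fixes P :: "nat set"
  assumes "finite P"
  shows "(\<Sum>p\<in>P. if d p then real (card {q\<in>P. d q \<and> q < p} choose j) else 0)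
     = real (card {q\<in>P. d q} choose Suc j)"
proof -
  have "(\<Sum>p\<in>P. if d p then real (card {q\<in>P. d q \<and> q < p} choose j) else 0)
      = (\<Sum>p\<in>{p\<in>P. d p}. real (card {q\<in>P. d q \<and> q < p} choose j))"
    by (rule sum.inter_filter[OF assms, symmetric])
  also have "\<dots> = (\<Sum>p\<in>{p\<in>P. d p}. real (card {q\<in>{p\<in>P. d p}. q < p} choose j))"
    by (intro sum.cong) (auto intro!: arg_cong[where f=card])
  also have "\<dots> = real (card {q\<in>P. d q} choose Suc j)"
    by (rule hockey_set) (simp add: assms)
  finally show ?thesis .
qed

lemma hockey1:
  fixes P :: "nat set"
  assumes "finite P"
  shows "(\<Sum>p\<in>{p\<in>P. p < b}. if c \<and> d p then real (card {q\<in>P. d q \<and> q < p} choose j) else 0)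
     = (if c then real (card {q\<in>P. d q \<and> q < b} choose Suc j) else 0)"
proof (cases c)
  case True
  have f: "finite {p\<in>P. p < b}" using assms by simp
  have "(\<Sum>p\<in>{p\<in>P. p < b}. if c \<and> d p then real (card {q\<in>P. d q \<and> q < p} choose j) else 0)
      = (\<Sum>p\<in>{p\<in>P. p < b}. if d p then real (card {q\<in>{p\<in>P. p < b}. d q \<and> q < p} choose j) else 0)"
  proof (intro sum.cong refl)
    fix x assume "x \<in> {p\<in>P. p < b}"
    then have "{q\<in>{p\<in>P. p < b}. d q \<and> q < x} = {q\<in>P. d q \<and> q < x}" by auto
    then show "(if c \<and> d x then real (card {q\<in>P. d q \<and> q < x} choose j) else 0) =
      (if d x then real (card {q\<in>{p\<in>P. p < b}. d q \<and> q < x} choose j) else 0)"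
      using True by simp
  qed
  also have "\<dots> = real (card {q\<in>{p\<in>P. p < b}. d q} choose Suc j)"
    by (rule hockey0[OF f])
  also have "{q\<in>{p\<in>P. p < b}. d q} = {q\<in>P. d q \<and> q < b}" by auto
  also have "real (card {q\<in>P. d q \<and> q < b} choose Suc j) = (if c then real (card {q\<in>P. d q \<and> q < b} choose Suc j) else 0)"
    using True by simp
  finally show ?thesis .
qed simp

definition esym :: "(nat \<Rightarrow> real) \<Rightarrow> nat set \<Rightarrow> nat \<Rightarrow> real" where
  "esym m A r = (\<Sum>I \<in> {I. I \<subseteq> A \<and> card I = r}. \<Prod>i\<in>I. m i)"

lemma esym_0: "finite A \<Longrightarrow> esym m A 0 = 1"
proof -
  assume f: "finite A"
  have "{I. I \<subseteq> A \<and> card I = 0} = {{}}" using f by (auto dest: finite_subset)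
  then show ?thesis unfolding esym_def by simp
qed

lemma esym_empty: "esym m {} (Suc r) = 0"
  unfolding esym_def by simp

lemma esym_insert:
  assumes f: "finite A" and a: "a \<notin> A"
  shows "esym m (insert a A) (Suc r) = esym m A (Suc r) + m a * esym m A r"
proof -
  let ?X = "{I. I \<subseteq> A \<and> card I = Suc r}"
  let ?Y = "{I. I \<subseteq> A \<and> card I = r}"
  have eq: "{I. I \<subseteq> insert a A \<and> card I = Suc r} = ?X \<union> insert a ` ?Y"
  proof (rule set_eqI, rule iffI)
    fix I assume I: "I \<in> {I. I \<subseteq> insert a A \<and> card I = Suc r}"
    have fI: "finite I" using I f by (auto dest: finite_subset)
    show "I \<in> ?X \<union> insert a ` ?Y"
    proof (cases "a \<in> I")
      case True
      have "I = insert a (I - {a})" using True by auto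
      moreover have "I - {a} \<in> ?Y" using I True fI by auto
      ultimately show ?thesis by blast
    next
      case False
      then show ?thesis using I by auto
    qed
  next
    fix I assume "I \<in> ?X \<union> insert a ` ?Y"
    then show "I \<in> {I. I \<subseteq> insert a A \<and> card I = Suc r}"
    proof
      assume "I \<in> ?X" then show ?thesis by auto
    next
      assume "I \<in> insert a ` ?Y"
      then obtain J where J: "J \<in> ?Y" "I = insert a J" by auto
      have "finite J" using J f by (auto dest: finite_subset)
      moreover have "a \<notin> J" using J a by auto
      ultimately show ?thesis using J by auto
    qed
  qed
  have fX: "finite ?X" using f by (auto intro: finite_subset[of _ "Pow A"])
  have fY: "finite ?Y" using f by (auto intro: finite_subset[of _ "Pow A"])
  have disj: "?X \<inter> insert a ` ?Y = {}" using a by auto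
  have inj: "inj_on (insert a) ?Y" unfolding inj_on_def
  proof (intro ballI impI)
    fix x y assume x: "x \<in> ?Y" and y: "y \<in> ?Y" and e: "insert a x = insert a y"
    have "x = insert a x - {a}" using x a by auto
    also have "\<dots> = insert a y - {a}" using e by simp
    also have "\<dots> = y" using y a by auto
    finally show "x = y" .
  qed
  have "esym m (insert a A) (Suc r) = (\<Sum>I\<in>?X. prod m I) + (\<Sum>I\<in>insert a ` ?Y. prod m I)"
    unfolding esym_def eq using fX fY disj by (simp add: sum.union_disjoint)
  also have "(\<Sum>I\<in>insert a ` ?Y. prod m I) = (\<Sum>J\<in>?Y. prod m (insert a J))"
    using inj by (simp add: sum.reindex)
  also have "\<dots> = (\<Sum>J\<in>?Y. m a * prod m J)"
  proof (rule sum.cong[OF refl])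
    fix J assume J: "J \<in> ?Y"
    have "finite J" using J f by (auto dest: finite_subset)
    moreover have "a \<notin> J" using J a by auto
    ultimately show "prod m (insert a J) = m a * prod m J" by simp
  qed
  finally show ?thesis unfolding esym_def by (simp add: sum_distrib_left)
qed

lemma N5_esym: "N5 m r = esym m {0,1,2,3,4} r"
proof -
  have "{0..4::nat} = {0,1,2,3,4}" by auto
  then show ?thesis unfolding N5_def esym_def by simp
qed

lemmas esym_simps = esym_insert esym_0 esym_empty

lemma N5_1: "N5 m 1 = m 0 + m 1 + m 2 + m 3 + m 4"
  unfolding N5_esym by (simp add: esym_simps algebra_simps)
lemma N5_2: "N5 m 2 = m 0 * m 1 + m 0 * m 2 + m 0 * m 3 + m 0 * m 4 + m 1 * m 2 + m 1 * m 3 + m 1 * m 4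
   + m 2 * m 3 + m 2 * m 4 + m 3 * m 4"
  unfolding N5_esym by (simp add: esym_simps algebra_simps eval_nat_numeral)
lemma N5_3: "N5 m 3 = m 0 * m 1 * m 2 + m 0 * m 1 * m 3 + m 0 * m 1 * m 4 + m 0 * m 2 * m 3 + m 0 * m 2 * m 4
   + m 0 * m 3 * m 4 + m 1 * m 2 * m 3 + m 1 * m 2 * m 4 + m 1 * m 3 * m 4 + m 2 * m 3 * m 4"
  unfolding N5_esym by (simp add: esym_simps algebra_simps eval_nat_numeral)
lemma N5_4: "N5 m 4 = m 0 * m 1 * m 2 * m 3 + m 0 * m 1 * m 2 * m 4 + m 0 * m 1 * m 3 * m 4
   + m 0 * m 2 * m 3 * m 4 + m 1 * m 2 * m 3 * m 4"
  unfolding N5_esym by (simp add: esym_simps algebra_simps eval_nat_numeral)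

lemma T_odd: "x \<in> T_set \<Longrightarrow> 0 < x \<and> (\<exists>j::nat. odd j \<and> real j - 1 \<le> x \<and> x \<le> real j)"
  unfolding T_set_def
proof (elim UnE)
  assume "x \<in> {x. 0 < x \<and> x \<le> 1}"
  then show ?thesis by (intro conjI exI[of _ 1]) auto
next
  assume "x \<in> {x. \<exists>k::nat. odd k \<and> 3 \<le> k \<and> real k - 1 \<le> x \<and> x \<le> real k}"
  then obtain k :: nat where k: "odd k" "3 \<le> k" "real k - 1 \<le> x" "x \<le> real k" by auto
  have "(3::real) \<le> real k" using k(2) by simp
  then show ?thesis using k by auto
qed

lemma T_aux:
  fixes n :: nat
  assumes x: "x \<in> T_set" and y: "y \<in> T_set" and d: "y - x \<le> 1" and xn: "x < real n" and ny: "real n < y"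
  shows False
proof -
  obtain j :: nat where j: "odd j" "real j - 1 \<le> x" "x \<le> real j" using T_odd[OF x] by blast
  obtain j' :: nat where j': "odd j'" "real j' - 1 \<le> y" "y \<le> real j'" using T_odd[OF y] by blast
  have "real j < real n + 1" using j xn by linarith
  then have jn: "j \<le> n" by linarith
  have "real n < real j'" using j' ny by linarith
  then have "n < j'" by linarith
  then have "j < j'" using jn by linarith
  then have "j + 2 \<le> j'" using j(1) j'(1) by presburger
  then have "real j + 2 \<le> real j'" by linarith
  then have "real j \<le> x" using j' d by linarith
  then have "x = real j" using j by linarith
  then have "real j < real n" using xn by simp
  then have "j + 1 \<le> n" by linarith
  then have "real j + 1 \<le> real n" by linarith
  then show False using ny d \<open>x = real j\<close> by linarith
qed

lemma U_prod:
  fixes n :: nat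
  assumes "(x, y) \<in> U_set"
  shows "0 \<le> (x - real n) * (y - real n)"
proof (rule ccontr)
  assume "\<not> 0 \<le> (x - real n) * (y - real n)"
  then have "(x < real n \<and> real n < y) \<or> (y < real n \<and> real n < x)"
    using mult_nonneg_nonneg[of "x - real n" "y - real n"] mult_nonpos_nonpos[of "x - real n" "y - real n"]
    by (cases "x < real n"; cases "y < real n"; cases "x = real n"; cases "y = real n") auto
  moreover have "x \<in> T_set" "y \<in> T_set" "\<bar>x - y\<bar> \<le> 1" using assms unfolding U_set_def by auto
  ultimately show False using T_aux[of x y n] T_aux[of y x n] by auto
qed

lemma binoms:
  fixes n :: nat
  shows "real (n choose 1) = real n"
    "real (n choose 2) = real n * (real n - 1) / 2"
    "real (n choose 3) = real n * (real n - 1) * (real n - 2) / 6"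
    "real (n choose 4) = real n * (real n - 1) * (real n - 2) * (real n - 3) / 24"
    "real (n choose 5) = real n * (real n - 1) * (real n - 2) * (real n - 3) * (real n - 4) / 120"
  by (simp_all add: binomial_gbinomial gbinomial_prod_rev eval_nat_numeral fact_numeral algebra_simps)

lemma poly_id:
  fixes m :: "nat \<Rightarrow> real" and x Q :: real
  assumes Q: "Q = m 0 * m 1 * m 2 * m 3 * m 4" and Qnz: "Q \<noteq> 0"
  shows "1 - (N5 m 4 - N5 m 3 + N5 m 2 - N5 m 1 + 1) / Q * x
    + 2 * (N5 m 3 - 3 * N5 m 2 + 7 * N5 m 1 - 15) / Q * (x * (x - 1) / 2)
    - 6 * (N5 m 2 - 6 * N5 m 1 + 25) / Q * (x * (x - 1) * (x - 2) / 6)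
    + 24 * (N5 m 1 - 10) / Q * (x * (x - 1) * (x - 2) * (x - 3) / 24)
    - 120 / Q * (x * (x - 1) * (x - 2) * (x - 3) * (x - 4) / 120)
    = (m 0 - x) * (m 1 - x) * (m 2 - x) * (m 3 - x) * (m 4 - x) / Q"
proof -
  have "Q * (1 - (N5 m 4 - N5 m 3 + N5 m 2 - N5 m 1 + 1) / Q * x
    + 2 * (N5 m 3 - 3 * N5 m 2 + 7 * N5 m 1 - 15) / Q * (x * (x - 1) / 2)
    - 6 * (N5 m 2 - 6 * N5 m 1 + 25) / Q * (x * (x - 1) * (x - 2) / 6)
    + 24 * (N5 m 1 - 10) / Q * (x * (x - 1) * (x - 2) * (x - 3) / 24)
    - 120 / Q * (x * (x - 1) * (x - 2) * (x - 3) * (x - 4) / 120))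
    = Q - (N5 m 4 - N5 m 3 + N5 m 2 - N5 m 1 + 1) * x
    + (N5 m 3 - 3 * N5 m 2 + 7 * N5 m 1 - 15) * (x * (x - 1))
    - (N5 m 2 - 6 * N5 m 1 + 25) * (x * (x - 1) * (x - 2))
    + (N5 m 1 - 10) * (x * (x - 1) * (x - 2) * (x - 3))
    - (x * (x - 1) * (x - 2) * (x - 3) * (x - 4))"
    using Qnz by (simp add: field_simps)
  also have "\<dots> = (m 0 - x) * (m 1 - x) * (m 2 - x) * (m 3 - x) * (m 4 - x)"
    unfolding Q N5_1 N5_2 N5_3 N5_4 by algebra
  finally show ?thesis using Qnz by (simp add: field_simps)
qed

lemma poly_ineq:
  fixes m :: "nat \<Rightarrow> real" and n :: nat
  assumes m0: "0 < m 0" "m 0 \<le> 1" and U1: "(m 1, m 2) \<in> U_set" and U2: "(m 3, m 4) \<in> U_set"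
    and Q: "Q = m 0 * m 1 * m 2 * m 3 * m 4"
  shows "1 - (N5 m 4 - N5 m 3 + N5 m 2 - N5 m 1 + 1) / Q * real (n choose 1)
    + 2 * (N5 m 3 - 3 * N5 m 2 + 7 * N5 m 1 - 15) / Q * real (n choose 2)
    - 6 * (N5 m 2 - 6 * N5 m 1 + 25) / Q * real (n choose 3)
    + 24 * (N5 m 1 - 10) / Q * real (n choose 4)
    - 120 / Q * real (n choose 5) \<le> (if n = 0 then 1 else 0)"
proof -
  have pos: "0 < m 1" "0 < m 2" "0 < m 3" "0 < m 4"
    using U1 U2 T_odd unfolding U_set_def by auto
  have Qpos: "0 < Q" unfolding Q using m0 pos by simp
  define x where "x = real n"
  have L: "1 - (N5 m 4 - N5 m 3 + N5 m 2 - N5 m 1 + 1) / Q * real (n choose 1)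
    + 2 * (N5 m 3 - 3 * N5 m 2 + 7 * N5 m 1 - 15) / Q * real (n choose 2)
    - 6 * (N5 m 2 - 6 * N5 m 1 + 25) / Q * real (n choose 3)
    + 24 * (N5 m 1 - 10) / Q * real (n choose 4)
    - 120 / Q * real (n choose 5) = (m 0 - x) * (m 1 - x) * (m 2 - x) * (m 3 - x) * (m 4 - x) / Q"
    unfolding binoms x_def[symmetric] using poly_id[OF Q] Qpos by simp
  show ?thesis
  proof (cases "n = 0")
    case True
    then show ?thesis unfolding L x_def using Qpos Q by simp
  next
    case False
    then have "1 \<le> x" unfolding x_def by simp
    then have a: "m 0 - x \<le> 0" using m0 by simp
    have b: "0 \<le> (m 1 - x) * (m 2 - x)" unfolding x_def by (rule U_prod[OF U1])
    have c: "0 \<le> (m 3 - x) * (m 4 - x)" unfolding x_def by (rule U_prod[OF U2])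
    have "(m 0 - x) * ((m 1 - x) * (m 2 - x)) * ((m 3 - x) * (m 4 - x)) \<le> 0"
      using a b c by (simp add: mult_nonpos_nonneg)
    then have "(m 0 - x) * (m 1 - x) * (m 2 - x) * (m 3 - x) * (m 4 - x) / Q \<le> 0"
      using Qpos by (simp add: divide_nonpos_pos mult.assoc)
    then show ?thesis unfolding L using False by simp
  qed
qed

lemma dvd_prod_prime:
  fixes m p a :: nat
  assumes "prime p" "\<not> p dvd m"
  shows "(m * p dvd a) = (m dvd a \<and> p dvd a)"
proof
  assume "m * p dvd a" then show "m dvd a \<and> p dvd a" by (meson dvd_mult_left dvd_mult_right)
next
  assume h: "m dvd a \<and> p dvd a"
  have "coprime m p" using prime_imp_coprime[OF assms] by (simp add: coprime_commute)
  then show "m * p dvd a" using h divides_mult by blast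
qed

lemma pnd: "prime (p::nat) \<Longrightarrow> prime q \<Longrightarrow> p \<noteq> q \<Longrightarrow> \<not> p dvd q"
  using primes_dvd_imp_eq by blast

lemma cond2:
  fixes p1 p2 a :: nat
  assumes "prime p1" "prime p2" "p2 < p1"
  shows "(p1 * p2 dvd a) = (p1 dvd a \<and> p2 dvd a)"
proof -
  have n2: "\<not> p2 dvd p1" using assms pnd by simp
  show ?thesis using dvd_prod_prime[OF assms(2) n2] by simp
qed

lemma cond3:
  fixes p1 p2 p3 a :: nat
  assumes "prime p1" "prime p2" "prime p3" "p2 < p1" "p3 < p2"
  shows "(p1 * p2 * p3 dvd a) = ((p1 dvd a \<and> p2 dvd a) \<and> p3 dvd a)"
proof -
  have n2: "\<not> p2 dvd p1" using assms pnd by simp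
  have n3: "\<not> p3 dvd p1 * p2" using assms pnd by (simp add: prime_dvd_mult_iff)
  show ?thesis using dvd_prod_prime[OF assms(3) n3] dvd_prod_prime[OF assms(2) n2] by simp
qed

lemma cond4:
  fixes p1 p2 p3 p4 a :: nat
  assumes "prime p1" "prime p2" "prime p3" "prime p4" "p2 < p1" "p3 < p2" "p4 < p3"
  shows "(p1 * p2 * p3 * p4 dvd a) = (((p1 dvd a \<and> p2 dvd a) \<and> p3 dvd a) \<and> p4 dvd a)"
proof -
  have n2: "\<not> p2 dvd p1" using assms pnd by simp
  have n3: "\<not> p3 dvd p1 * p2" using assms pnd by (simp add: prime_dvd_mult_iff)
  have n4: "\<not> p4 dvd p1 * p2 * p3" using assms pnd by (simp add: prime_dvd_mult_iff)
  show ?thesis using dvd_prod_prime[OF assms(4) n4] dvd_prod_prime[OF assms(3) n3]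
      dvd_prod_prime[OF assms(2) n2] by simp
qed

lemma cond5:
  fixes p1 p2 p3 p4 p5 a :: nat
  assumes "prime p1" "prime p2" "prime p3" "prime p4" "prime p5" "p2 < p1" "p3 < p2" "p4 < p3" "p5 < p4"
  shows "(p1 * p2 * p3 * p4 * p5 dvd a) = ((((p1 dvd a \<and> p2 dvd a) \<and> p3 dvd a) \<and> p4 dvd a) \<and> p5 dvd a)"
proof -
  have n2: "\<not> p2 dvd p1" using assms pnd by simp
  have n3: "\<not> p3 dvd p1 * p2" using assms pnd by (simp add: prime_dvd_mult_iff)
  have n4: "\<not> p4 dvd p1 * p2 * p3" using assms pnd by (simp add: prime_dvd_mult_iff)
  have n5: "\<not> p5 dvd p1 * p2 * p3 * p4" using assms pnd by (simp add: prime_dvd_mult_iff)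
  show ?thesis using dvd_prod_prime[OF assms(5) n5] dvd_prod_prime[OF assms(4) n4] dvd_prod_prime[OF assms(3) n3]
      dvd_prod_prime[OF assms(2) n2] by simp
qed

context
  fixes P :: "nat set" and w :: real and a :: nat
  assumes finP: "finite P" and Pprime: "\<And>p. p \<in> P \<Longrightarrow> prime p" and Pw: "\<And>p. p \<in> P \<Longrightarrow> w \<le> real p"
begin

lemma I5_rough:
  assumes ra: "rough w a"
  shows "(\<Sum>p1\<in>P. \<Sum>p2\<in>{p\<in>P. p < p1}. \<Sum>p3\<in>{p\<in>P. p < p2}. \<Sum>p4\<in>{p\<in>P. p < p3}. \<Sum>p5\<in>{p\<in>P. p < p4}.
       if p1 * p2 * p3 * p4 * p5 dvd a \<and> rough w (a div (p1 * p2 * p3 * p4 * p5)) then 1 else 0)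
    = real (card {q\<in>P. q dvd a} choose 5)"
proof -
  have "(\<Sum>p1\<in>P. \<Sum>p2\<in>{p\<in>P. p < p1}. \<Sum>p3\<in>{p\<in>P. p < p2}. \<Sum>p4\<in>{p\<in>P. p < p3}. \<Sum>p5\<in>{p\<in>P. p < p4}.
       if p1 * p2 * p3 * p4 * p5 dvd a \<and> rough w (a div (p1 * p2 * p3 * p4 * p5)) then 1 else 0)
    = (\<Sum>p1\<in>P. \<Sum>p2\<in>{p\<in>P. p < p1}. \<Sum>p3\<in>{p\<in>P. p < p2}. \<Sum>p4\<in>{p\<in>P. p < p3}. \<Sum>p5\<in>{p\<in>P. p < p4}.
       if (((p1 dvd a \<and> p2 dvd a) \<and> p3 dvd a) \<and> p4 dvd a) \<and> p5 dvd a
       then real (card {q\<in>P. q dvd a \<and> q < p5} choose 0) else 0)"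
    by (intro sum.cong refl) (simp only: rough_div[OF ra], clarsimp simp: cond5 Pprime)
  also have "\<dots> = real (card {q\<in>P. q dvd a} choose 5)"
    by (simp only: hockey1[OF finP] hockey0[OF finP]) (simp add: eval_nat_numeral)
  finally show ?thesis .
qed

lemma I5_nrough:
  assumes ra: "\<not> rough w a"
  shows "(\<Sum>p1\<in>P. \<Sum>p2\<in>{p\<in>P. p < p1}. \<Sum>p3\<in>{p\<in>P. p < p2}. \<Sum>p4\<in>{p\<in>P. p < p3}. \<Sum>p5\<in>{p\<in>P. p < p4}.
       if p1 * p2 * p3 * p4 * p5 dvd a \<and> rough w (a div (p1 * p2 * p3 * p4 * p5)) then 1 else 0)
    = (0::real)"
  by (intro sum.neutral ballI) (simp add: not_rough[OF ra] rough_mult rough_prime Pprime Pw)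


lemma I1_rough:
  assumes ra: "rough w a"
  shows "(\<Sum>p1\<in>P. if p1 dvd a \<and> rough w (a div p1) then 1 else 0) = real (card {q\<in>P. q dvd a} choose 1)"
proof -
  have "(\<Sum>p1\<in>P. if p1 dvd a \<and> rough w (a div p1) then 1 else 0)
    = (\<Sum>p1\<in>P. if p1 dvd a then real (card {q\<in>P. q dvd a \<and> q < p1} choose 0) else 0)"
    by (intro sum.cong refl) (simp only: rough_div[OF ra], clarsimp)
  also have "\<dots> = real (card {q\<in>P. q dvd a} choose 1)"
    by (simp only: hockey1[OF finP] hockey0[OF finP]) (simp add: eval_nat_numeral)
  finally show ?thesis .
qed

lemma I2_rough:
  assumes ra: "rough w a"
  shows "(\<Sum>p1\<in>P. \<Sum>p2\<in>{p\<in>P. p < p1}.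
       if p1 * p2 dvd a \<and> rough w (a div (p1 * p2)) then 1 else 0)
    = real (card {q\<in>P. q dvd a} choose 2)"
proof -
  have "(\<Sum>p1\<in>P. \<Sum>p2\<in>{p\<in>P. p < p1}.
       if p1 * p2 dvd a \<and> rough w (a div (p1 * p2)) then 1 else 0)
    = (\<Sum>p1\<in>P. \<Sum>p2\<in>{p\<in>P. p < p1}.
       if p1 dvd a \<and> p2 dvd a
       then real (card {q\<in>P. q dvd a \<and> q < p2} choose 0) else 0)"
    by (intro sum.cong refl) (simp only: rough_div[OF ra], clarsimp simp: cond2 Pprime)
  also have "\<dots> = real (card {q\<in>P. q dvd a} choose 2)"
    by (simp only: hockey1[OF finP] hockey0[OF finP]) (simp add: eval_nat_numeral)
  finally show ?thesis .
qed

lemma I3_rough: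
  assumes ra: "rough w a"
  shows "(\<Sum>p1\<in>P. \<Sum>p2\<in>{p\<in>P. p < p1}. \<Sum>p3\<in>{p\<in>P. p < p2}.
       if p1 * p2 * p3 dvd a \<and> rough w (a div (p1 * p2 * p3)) then 1 else 0)
    = real (card {q\<in>P. q dvd a} choose 3)"
proof -
  have "(\<Sum>p1\<in>P. \<Sum>p2\<in>{p\<in>P. p < p1}. \<Sum>p3\<in>{p\<in>P. p < p2}.
       if p1 * p2 * p3 dvd a \<and> rough w (a div (p1 * p2 * p3)) then 1 else 0)
    = (\<Sum>p1\<in>P. \<Sum>p2\<in>{p\<in>P. p < p1}. \<Sum>p3\<in>{p\<in>P. p < p2}.
       if (p1 dvd a \<and> p2 dvd a) \<and> p3 dvd a
       then real (card {q\<in>P. q dvd a \<and> q < p3} choose 0) else 0)"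
    by (intro sum.cong refl) (simp only: rough_div[OF ra], clarsimp simp: cond3 Pprime)
  also have "\<dots> = real (card {q\<in>P. q dvd a} choose 3)"
    by (simp only: hockey1[OF finP] hockey0[OF finP]) (simp add: eval_nat_numeral)
  finally show ?thesis .
qed

lemma I4_rough:
  assumes ra: "rough w a"
  shows "(\<Sum>p1\<in>P. \<Sum>p2\<in>{p\<in>P. p < p1}. \<Sum>p3\<in>{p\<in>P. p < p2}. \<Sum>p4\<in>{p\<in>P. p < p3}.
       if p1 * p2 * p3 * p4 dvd a \<and> rough w (a div (p1 * p2 * p3 * p4)) then 1 else 0)
    = real (card {q\<in>P. q dvd a} choose 4)"
proof -
  have "(\<Sum>p1\<in>P. \<Sum>p2\<in>{p\<in>P. p < p1}. \<Sum>p3\<in>{p\<in>P. p < p2}. \<Sum>p4\<in>{p\<in>P. p < p3}.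
       if p1 * p2 * p3 * p4 dvd a \<and> rough w (a div (p1 * p2 * p3 * p4)) then 1 else 0)
    = (\<Sum>p1\<in>P. \<Sum>p2\<in>{p\<in>P. p < p1}. \<Sum>p3\<in>{p\<in>P. p < p2}. \<Sum>p4\<in>{p\<in>P. p < p3}.
       if ((p1 dvd a \<and> p2 dvd a) \<and> p3 dvd a) \<and> p4 dvd a
       then real (card {q\<in>P. q dvd a \<and> q < p4} choose 0) else 0)"
    by (intro sum.cong refl) (simp only: rough_div[OF ra], clarsimp simp: cond4 Pprime)
  also have "\<dots> = real (card {q\<in>P. q dvd a} choose 4)"
    by (simp only: hockey1[OF finP] hockey0[OF finP]) (simp add: eval_nat_numeral)
  finally show ?thesis .
qed

lemma I1_nrough:
  assumes ra: "\<not> rough w a"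
  shows "(\<Sum>p1\<in>P. if p1 dvd a \<and> rough w (a div p1) then 1 else 0) = (0::real)"
  by (intro sum.neutral ballI) (simp add: not_rough[OF ra] rough_mult rough_prime Pprime Pw)

lemma I2_nrough:
  assumes ra: "\<not> rough w a"
  shows "(\<Sum>p1\<in>P. \<Sum>p2\<in>{p\<in>P. p < p1}.
       if p1 * p2 dvd a \<and> rough w (a div (p1 * p2)) then 1 else 0) = (0::real)"
  by (intro sum.neutral ballI) (simp add: not_rough[OF ra] rough_mult rough_prime Pprime Pw)

lemma I3_nrough:
  assumes ra: "\<not> rough w a"
  shows "(\<Sum>p1\<in>P. \<Sum>p2\<in>{p\<in>P. p < p1}. \<Sum>p3\<in>{p\<in>P. p < p2}.
       if p1 * p2 * p3 dvd a \<and> rough w (a div (p1 * p2 * p3)) then 1 else 0) = (0::real)"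
  by (intro sum.neutral ballI) (simp add: not_rough[OF ra] rough_mult rough_prime Pprime Pw)

lemma I4_nrough:
  assumes ra: "\<not> rough w a"
  shows "(\<Sum>p1\<in>P. \<Sum>p2\<in>{p\<in>P. p < p1}. \<Sum>p3\<in>{p\<in>P. p < p2}. \<Sum>p4\<in>{p\<in>P. p < p3}.
       if p1 * p2 * p3 * p4 dvd a \<and> rough w (a div (p1 * p2 * p3 * p4)) then 1 else 0) = (0::real)"
  by (intro sum.neutral ballI) (simp add: not_rough[OF ra] rough_mult rough_prime Pprime Pw)

end

theorem theorem6:
  fixes A :: "nat set" and w z :: real and m :: "nat \<Rightarrow> real"
  assumes "finite A" and "\<forall>a\<in>A. 0 < a"
    and "w \<le> z"
    and "0 < m 0" and "m 0 \<le> 1"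
    and "(m 1, m 2) \<in> U_set" and "(m 3, m 4) \<in> U_set"
  defines "Q \<equiv> m 0 * m 1 * m 2 * m 3 * m 4"
    and "P \<equiv> primes_in w z"
  shows "real (sift A z) \<ge> real (sift A w)
    - (N5 m 4 - N5 m 3 + N5 m 2 - N5 m 1 + 1) / Q *
        (\<Sum>p1\<in>P. real (sift (restr A p1) w))
    + 2 * (N5 m 3 - 3 * N5 m 2 + 7 * N5 m 1 - 15) / Q *
        (\<Sum>p1\<in>P. \<Sum>p2\<in>{p\<in>P. p < p1}. real (sift (restr A (p1 * p2)) w))
    - 6 * (N5 m 2 - 6 * N5 m 1 + 25) / Q *
        (\<Sum>p1\<in>P. \<Sum>p2\<in>{p\<in>P. p < p1}. \<Sum>p3\<in>{p\<in>P. p < p2}.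
           real (sift (restr A (p1 * p2 * p3)) w))
    + 24 * (N5 m 1 - 10) / Q *
        (\<Sum>p1\<in>P. \<Sum>p2\<in>{p\<in>P. p < p1}. \<Sum>p3\<in>{p\<in>P. p < p2}. \<Sum>p4\<in>{p\<in>P. p < p3}.
           real (sift (restr A (p1 * p2 * p3 * p4)) w))
    - 120 / Q *
        (\<Sum>p1\<in>P. \<Sum>p2\<in>{p\<in>P. p < p1}. \<Sum>p3\<in>{p\<in>P. p < p2}. \<Sum>p4\<in>{p\<in>P. p < p3}.
           \<Sum>p5\<in>{p\<in>P. p < p4}. real (sift (restr A (p1 * p2 * p3 * p4 * p5)) w))"
proof -
  note finA = assms(1)
  have Pprime: "\<And>p. p \<in> P \<Longrightarrow> prime p" and Pw: "\<And>p. p \<in> P \<Longrightarrow> w \<le> real p"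
    and Pz: "\<And>p. p \<in> P \<Longrightarrow> real p < z"
    unfolding P_def primes_in_def by auto
  have Ppos: "\<And>p. p \<in> P \<Longrightarrow> 0 < p" using Pprime prime_gt_0_nat by blast
  have finP: "finite P"
  proof (rule finite_subset)
    show "P \<subseteq> {..nat \<lceil>z\<rceil>}"
    proof
      fix p assume "p \<in> P"
      then have "real p < z" by (rule Pz)
      then have "real p \<le> real (nat \<lceil>z\<rceil>)" by linarith
      then show "p \<in> {..nat \<lceil>z\<rceil>}" by simp
    qed
  qed simp
  define X1 where "X1 a = (\<Sum>p1\<in>P. if p1 dvd a \<and> rough w (a div p1) then 1 else (0::real))" for a
  define X2 where "X2 a = (\<Sum>p1\<in>P. \<Sum>p2\<in>{p\<in>P. p < p1}.
       if p1 * p2 dvd a \<and> rough w (a div (p1 * p2)) then 1 else (0::real))" for a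
  define X3 where "X3 a = (\<Sum>p1\<in>P. \<Sum>p2\<in>{p\<in>P. p < p1}. \<Sum>p3\<in>{p\<in>P. p < p2}.
       if p1 * p2 * p3 dvd a \<and> rough w (a div (p1 * p2 * p3)) then 1 else (0::real))" for a
  define X4 where "X4 a = (\<Sum>p1\<in>P. \<Sum>p2\<in>{p\<in>P. p < p1}. \<Sum>p3\<in>{p\<in>P. p < p2}. \<Sum>p4\<in>{p\<in>P. p < p3}.
       if p1 * p2 * p3 * p4 dvd a \<and> rough w (a div (p1 * p2 * p3 * p4)) then 1 else (0::real))" for a
  define X5 where "X5 a = (\<Sum>p1\<in>P. \<Sum>p2\<in>{p\<in>P. p < p1}. \<Sum>p3\<in>{p\<in>P. p < p2}. \<Sum>p4\<in>{p\<in>P. p < p3}. \<Sum>p5\<in>{p\<in>P. p < p4}.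
       if p1 * p2 * p3 * p4 * p5 dvd a \<and> rough w (a div (p1 * p2 * p3 * p4 * p5)) then 1 else (0::real))" for a
  have s1: "(\<Sum>p1\<in>P. real (sift (restr A p1) w)) = (\<Sum>a\<in>A. X1 a)"
  proof -
    have "(\<Sum>p1\<in>P. real (sift (restr A p1) w))
      = (\<Sum>p1\<in>P. \<Sum>a\<in>A. if p1 dvd a \<and> rough w (a div p1) then 1 else (0::real))"
      by (intro sum.cong refl) (clarsimp simp: sift_restr[OF finA] Ppos)
    also have "\<dots> = (\<Sum>a\<in>A. X1 a)" unfolding X1_def by (simp only: sum.swap[where B=A])
    finally show ?thesis .
  qed
  have s2: "(\<Sum>p1\<in>P. \<Sum>p2\<in>{p\<in>P. p < p1}. real (sift (restr A (p1 * p2)) w)) = (\<Sum>a\<in>A. X2 a)"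
  proof -
    have "(\<Sum>p1\<in>P. \<Sum>p2\<in>{p\<in>P. p < p1}. real (sift (restr A (p1 * p2)) w))
      = (\<Sum>p1\<in>P. \<Sum>p2\<in>{p\<in>P. p < p1}. \<Sum>a\<in>A.
          if p1 * p2 dvd a \<and> rough w (a div (p1 * p2)) then 1 else (0::real))"
      by (intro sum.cong refl) (clarsimp simp: sift_restr[OF finA] Ppos)
    also have "\<dots> = (\<Sum>a\<in>A. X2 a)" unfolding X2_def by (simp only: sum.swap[where B=A])
    finally show ?thesis .
  qed
  have s3: "(\<Sum>p1\<in>P. \<Sum>p2\<in>{p\<in>P. p < p1}. \<Sum>p3\<in>{p\<in>P. p < p2}.
           real (sift (restr A (p1 * p2 * p3)) w)) = (\<Sum>a\<in>A. X3 a)"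
  proof -
    have "(\<Sum>p1\<in>P. \<Sum>p2\<in>{p\<in>P. p < p1}. \<Sum>p3\<in>{p\<in>P. p < p2}.
           real (sift (restr A (p1 * p2 * p3)) w))
      = (\<Sum>p1\<in>P. \<Sum>p2\<in>{p\<in>P. p < p1}. \<Sum>p3\<in>{p\<in>P. p < p2}. \<Sum>a\<in>A.
          if p1 * p2 * p3 dvd a \<and> rough w (a div (p1 * p2 * p3)) then 1 else (0::real))"
      by (intro sum.cong refl) (clarsimp simp: sift_restr[OF finA] Ppos)
    also have "\<dots> = (\<Sum>a\<in>A. X3 a)" unfolding X3_def by (simp only: sum.swap[where B=A])
    finally show ?thesis .
  qed
  have s4: "(\<Sum>p1\<in>P. \<Sum>p2\<in>{p\<in>P. p < p1}. \<Sum>p3\<in>{p\<in>P. p < p2}. \<Sum>p4\<in>{p\<in>P. p < p3}.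
           real (sift (restr A (p1 * p2 * p3 * p4)) w)) = (\<Sum>a\<in>A. X4 a)"
  proof -
    have "(\<Sum>p1\<in>P. \<Sum>p2\<in>{p\<in>P. p < p1}. \<Sum>p3\<in>{p\<in>P. p < p2}. \<Sum>p4\<in>{p\<in>P. p < p3}.
           real (sift (restr A (p1 * p2 * p3 * p4)) w))
      = (\<Sum>p1\<in>P. \<Sum>p2\<in>{p\<in>P. p < p1}. \<Sum>p3\<in>{p\<in>P. p < p2}. \<Sum>p4\<in>{p\<in>P. p < p3}. \<Sum>a\<in>A.
          if p1 * p2 * p3 * p4 dvd a \<and> rough w (a div (p1 * p2 * p3 * p4)) then 1 else (0::real))"
      by (intro sum.cong refl) (clarsimp simp: sift_restr[OF finA] Ppos)
    also have "\<dots> = (\<Sum>a\<in>A. X4 a)" unfolding X4_def by (simp only: sum.swap[where B=A])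
    finally show ?thesis .
  qed
  have s5: "(\<Sum>p1\<in>P. \<Sum>p2\<in>{p\<in>P. p < p1}. \<Sum>p3\<in>{p\<in>P. p < p2}. \<Sum>p4\<in>{p\<in>P. p < p3}.
           \<Sum>p5\<in>{p\<in>P. p < p4}. real (sift (restr A (p1 * p2 * p3 * p4 * p5)) w)) = (\<Sum>a\<in>A. X5 a)"
  proof -
    have "(\<Sum>p1\<in>P. \<Sum>p2\<in>{p\<in>P. p < p1}. \<Sum>p3\<in>{p\<in>P. p < p2}. \<Sum>p4\<in>{p\<in>P. p < p3}.
           \<Sum>p5\<in>{p\<in>P. p < p4}. real (sift (restr A (p1 * p2 * p3 * p4 * p5)) w))
      = (\<Sum>p1\<in>P. \<Sum>p2\<in>{p\<in>P. p < p1}. \<Sum>p3\<in>{p\<in>P. p < p2}. \<Sum>p4\<in>{p\<in>P. p < p3}.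
           \<Sum>p5\<in>{p\<in>P. p < p4}. \<Sum>a\<in>A.
          if p1 * p2 * p3 * p4 * p5 dvd a \<and> rough w (a div (p1 * p2 * p3 * p4 * p5)) then 1 else (0::real))"
      by (intro sum.cong refl) (clarsimp simp: sift_restr[OF finA] Ppos)
    also have "\<dots> = (\<Sum>a\<in>A. X5 a)" unfolding X5_def by (simp only: sum.swap[where B=A])
    finally show ?thesis .
  qed
  define c1 where "c1 = (N5 m 4 - N5 m 3 + N5 m 2 - N5 m 1 + 1) / Q"
  define c2 where "c2 = 2 * (N5 m 3 - 3 * N5 m 2 + 7 * N5 m 1 - 15) / Q"
  define c3 where "c3 = 6 * (N5 m 2 - 6 * N5 m 1 + 25) / Q"
  define c4 where "c4 = 24 * (N5 m 1 - 10) / Q"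
  define c5 where "c5 = 120 / Q"
  have key: "(if rough w a then 1 else 0) - c1 * X1 a + c2 * X2 a - c3 * X3 a + c4 * X4 a - c5 * X5 a
      \<le> (if rough z a then 1 else (0::real))" if aA: "a \<in> A" for a
  proof (cases "rough w a")
    case True
    define n where "n = card {q\<in>P. q dvd a}"
    have x: "X1 a = real (n choose 1)" "X2 a = real (n choose 2)" "X3 a = real (n choose 3)"
      "X4 a = real (n choose 4)" "X5 a = real (n choose 5)"
      unfolding n_def X1_def X2_def X3_def X4_def X5_def
      using I1_rough[OF finP Pprime Pw True] I2_rough[OF finP Pprime Pw True] I3_rough[OF finP Pprime Pw True]
        I4_rough[OF finP Pprime Pw True] I5_rough[OF finP Pprime Pw True] by auto
    have "rough z a \<longleftrightarrow> {q\<in>P. q dvd a} = {}"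
      using True assms(3) unfolding rough_def P_def primes_in_def by (auto simp: not_less)
    also have "\<dots> \<longleftrightarrow> n = 0" unfolding n_def using finP by simp
    finally have rz: "rough z a \<longleftrightarrow> n = 0" .
    show ?thesis
      unfolding x rz c1_def c2_def c3_def c4_def c5_def using True
      using poly_ineq[OF assms(4,5,6,7) Q_def[THEN meta_eq_to_obj_eq], of n] by simp
  next
    case False
    have x: "X1 a = 0" "X2 a = 0" "X3 a = 0" "X4 a = 0" "X5 a = 0"
      unfolding X1_def X2_def X3_def X4_def X5_def
      using I1_nrough[OF finP Pprime Pw False] I2_nrough[OF finP Pprime Pw False] I3_nrough[OF finP Pprime Pw False]
        I4_nrough[OF finP Pprime Pw False] I5_nrough[OF finP Pprime Pw False] by auto
    have "\<not> rough z a"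
    proof
      assume rz: "rough z a"
      have "rough w a" unfolding rough_def
      proof (intro allI impI)
        fix p assume "prime p \<and> p dvd a"
        then have "z \<le> real p" using rz unfolding rough_def by blast
        then show "w \<le> real p" using assms(3) by linarith
      qed
      then show False using False by blast
    qed
    then show ?thesis unfolding x using False by simp
  qed
  have mono: "(\<Sum>a\<in>A. (if rough w a then 1 else 0) - c1 * X1 a + c2 * X2 a - c3 * X3 a + c4 * X4 a - c5 * X5 a)
      \<le> (\<Sum>a\<in>A. if rough z a then 1 else (0::real))"
    by (rule sum_mono) (rule key)
  have lin: "(\<Sum>a\<in>A. (if rough w a then 1 else 0) - c1 * X1 a + c2 * X2 a - c3 * X3 a + c4 * X4 a - c5 * X5 a)
      = (\<Sum>a\<in>A. if rough w a then 1 else (0::real)) - c1 * (\<Sum>a\<in>A. X1 a) + c2 * (\<Sum>a\<in>A. X2 a)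
        - c3 * (\<Sum>a\<in>A. X3 a) + c4 * (\<Sum>a\<in>A. X4 a) - c5 * (\<Sum>a\<in>A. X5 a)"
    by (simp add: sum.distrib sum_subtractf sum_distrib_left)
  have main: "real (sift A z) \<ge> real (sift A w) - c1 * (\<Sum>a\<in>A. X1 a) + c2 * (\<Sum>a\<in>A. X2 a)
        - c3 * (\<Sum>a\<in>A. X3 a) + c4 * (\<Sum>a\<in>A. X4 a) - c5 * (\<Sum>a\<in>A. X5 a)"
    unfolding sift_sum[OF finA] using mono lin by linarith
  show ?thesis
    unfolding s1 s2 s3 s4 s5 using main unfolding c1_def c2_def c3_def c4_def c5_def .
qed

end
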